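(* Let $p\ge1$ and let $u,v\in E_1$ with $v$ a vertex of $\Gamma^p_u$. Then the sequences $\mathcal L^u$ and $\mathcal L^v$ are compatible.
   Context: $X=\{0,\dots,p\}$; $\mathcal G_{S_p}$ is generated by $e_1,\dots,e_p$ acting on $X^\infty$ by $e_i(0w)=i\,e_i(w)$, $e_i(iw)=0w$, $e_i(jw)=jw$ for $j\notin\{0,i\}$; $\Gamma^p_u$ is the Schreier graph on the orbit of $u$ (edges $x$—$e_i(x)$). $E_1$ is the set of $w\in X^\infty$ with $\Gamma^p_w$ one-ended; every $w\in E_1$ has an infinite decomposition $w=0^ka_1u_1a_2u_2\cdots$ with $k\ge0$, $a_j\in\{1,\dots,p\}$, $a_{j+1}\ne a_j$, $u_j\in\{0,a_j\}^\ast$ finite. With $N_j=k+j+\sum_{\ell\le j}|u_\ell|$, the path of cycles of $w$ consists of the $e_{a_j}$-cycles $P^w_j$ with vertex sets $\{0,a_j\}^{N_j}a_{j+1}u_{j+1}a_{j+2}u_{j+2}\cdots$, and $\mathcal L^w=(2^{N_j})_{j\ge1}$ is the sequence of their lengths. Two integer sequences $(x_i)_{i\in\mathbb N},(y_i)_{i\in\mathbb N}$ are compatible if there exist $l,h\in\mathbb N$ with $x_{l+n}=y_{h+n}$ for all $n\in\mathbb N$. *)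

theory Defs
  imports Main
begin

text \<open>Infinite words over X = {0,...,p} are functions nat => nat with values at most p.
  Prepending a letter c to a word w is case_nat c w.\<close>

definition words :: "nat \<Rightarrow> (nat \<Rightarrow> nat) set" where
  "words p = {w. \<forall>n. w n \<le> p}"

text \<open>The generator e_i: the unique solution of e_i(0w) = i e_i(w), e_i(iw) = 0w,
  e_i(jw) = jw (j not in {0,i}); explicitly, the maximal prefix of zeros is turned into i's,
  and the first non-zero letter (if any) is swapped with 0 if it equals i.\<close>

definition gen :: "nat \<Rightarrow> (nat \<Rightarrow> nat) \<Rightarrow> (nat \<Rightarrow> nat)" where
  "gen i w = (\<lambda>n. if (\<forall>m<n. w m = 0)
                   then (if w n = 0 then i else if w n = i then 0 else w n)
                   else w n)"

lemma gen_zero: "(gen i (case_nat 0 w) ) = case_nat i (gen i w)" (is "?l = ?r")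
  proof (rule ext)
  fix n show "?l n = ?r n" by (cases n) (auto simp: gen_def All_less_Suc2)
qed

lemma gen_self: assumes "i \<noteq> 0" shows "gen i (case_nat i w) = case_nat 0 w" (is "?l = ?r")
  proof (rule ext)
  fix n show "?l n = ?r n" using assms by (cases n) (auto simp: gen_def All_less_Suc2)
qed

lemma gen_other: assumes "j \<noteq> 0" "j \<noteq> i" shows "gen i (case_nat j w) = case_nat j w" (is "?l = ?r")
  proof (rule ext)
  fix n show "?l n = ?r n" using assms by (cases n) (auto simp: gen_def All_less_Suc2)
qed

definition schreier_adj :: "nat \<Rightarrow> (nat \<Rightarrow> nat) \<Rightarrow> (nat \<Rightarrow> nat) \<Rightarrow> bool" where
  "schreier_adj p x y \<longleftrightarrow> (\<exists>i\<in>{1..p}. y = gen i x \<or> x = gen i y)"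

text \<open>Vertex set of Gamma^p_u: the orbit of u, i.e. the connected component of u.\<close>

definition orbit :: "nat \<Rightarrow> (nat \<Rightarrow> nat) \<Rightarrow> (nat \<Rightarrow> nat) set" where
  "orbit p u = {v. (u, v) \<in> {(x, y). schreier_adj p x y}\<^sup>*}"

definition comp :: "'a set \<Rightarrow> ('a \<Rightarrow> 'a \<Rightarrow> bool) \<Rightarrow> 'a set \<Rightarrow> 'a \<Rightarrow> 'a set" where
  "comp V adj F x = {y \<in> V - F. (x, y) \<in> {(a, b). a \<in> V - F \<and> b \<in> V - F \<and> adj a b}\<^sup>*}"

text \<open>One-ended: the supremum over finite vertex sets F of the number of infinite
  components of the graph minus F equals 1.\<close>

definition one_ended :: "'a set \<Rightarrow> ('a \<Rightarrow> 'a \<Rightarrow> bool) \<Rightarrow> bool" where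
  "one_ended V adj \<longleftrightarrow>
     (\<exists>F. finite F \<and> F \<subseteq> V \<and> (\<exists>x\<in>V - F. infinite (comp V adj F x))) \<and>
     (\<forall>F. finite F \<and> F \<subseteq> V \<longrightarrow>
        (\<forall>x\<in>V - F. \<forall>y\<in>V - F. infinite (comp V adj F x) \<and> infinite (comp V adj F y)
            \<longrightarrow> comp V adj F x = comp V adj F y))"

definition E1 :: "nat \<Rightarrow> (nat \<Rightarrow> nat) set" where
  "E1 p = {w \<in> words p. one_ended (orbit p w) (schreier_adj p)}"

text \<open>Decomposition w = 0^k a_1 u_1 a_2 u_2 ...; indices j >= 1.
  Ncount k us j = k + j + sum_{l=1..j} |u_l| = N_j; N_0 = k is the position of a_1,
  and in general a_j sits at position N_{j-1}.\<close>

definition Ncount :: "nat \<Rightarrow> (nat \<Rightarrow> nat list) \<Rightarrow> nat \<Rightarrow> nat" where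
  "Ncount k us j = k + j + (\<Sum>l=1..j. length (us l))"

definition decomp :: "nat \<Rightarrow> (nat \<Rightarrow> nat) \<Rightarrow> nat \<Rightarrow> (nat \<Rightarrow> nat) \<Rightarrow> (nat \<Rightarrow> nat list) \<Rightarrow> bool" where
  "decomp p w k a us \<longleftrightarrow>
     (\<forall>n<k. w n = 0) \<and>
     (\<forall>j\<ge>1. a j \<in> {1..p} \<and> a (Suc j) \<noteq> a j \<and> set (us j) \<subseteq> {0, a j} \<and>
        w (Ncount k us (j - 1)) = a j \<and>
        (\<forall>i<length (us j). w (Ncount k us (j - 1) + 1 + i) = us j ! i))"

text \<open>L^w = (2^{N_j})_{j>=1}; stored 0-based: Lseq p w n = 2^{N_{n+1}}.\<close>

definition Lseq :: "nat \<Rightarrow> (nat \<Rightarrow> nat) \<Rightarrow> nat \<Rightarrow> nat" where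
  "Lseq p w = (let (k, a, us) = (SOME (k, a, us). decomp p w k a us)
               in (\<lambda>n. 2 ^ Ncount k us (Suc n)))"

definition compatible :: "(nat \<Rightarrow> nat) \<Rightarrow> (nat \<Rightarrow> nat) \<Rightarrow> bool" where
  "compatible x y \<longleftrightarrow> (\<exists>l h. \<forall>n. x (l + n) = y (h + n))"

end

theory Submission
  imports Defs "HOL-Library.Infinite_Set"
begin

primrec lastnz :: "(nat \<Rightarrow> nat) \<Rightarrow> nat \<Rightarrow> nat" where
  "lastnz w 0 = 0"
| "lastnz w (Suc n) = (if w n \<noteq> 0 then w n else lastnz w n)"

definition Pset :: "(nat \<Rightarrow> nat) \<Rightarrow> nat set" where
  "Pset w = {n. w n \<noteq> 0 \<and> w n \<noteq> lastnz w n}"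

lemma N_Suc: "Ncount k us (Suc j) = Ncount k us j + 1 + length (us (Suc j))"
  by (simp add: Ncount_def)

lemma N0: "Ncount k us 0 = k" by (simp add: Ncount_def)

lemma N_strict: "strict_mono (Ncount k us)"
  by (rule strict_mono_Suc_iff[THEN iffD2]) (simp add: N_Suc)

lemma lastnz_zero: "(\<forall>m<n. w m = 0) \<Longrightarrow> lastnz w n = 0"
  by (induction n) auto

lemma dec_j:
  assumes "decomp p w k a us"
  shows "a (Suc j) \<in> {1..p} \<and> a (Suc (Suc j)) \<noteq> a (Suc j) \<and> set (us (Suc j)) \<subseteq> {0, a (Suc j)} \<and>
        w (Ncount k us j) = a (Suc j) \<and>
        (\<forall>i<length (us (Suc j)). w (Ncount k us j + 1 + i) = us (Suc j) ! i)"
proof -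
  have A: "\<And>j. j \<ge> 1 \<Longrightarrow> a j \<in> {1..p} \<and> a (Suc j) \<noteq> a j \<and> set (us j) \<subseteq> {0, a j} \<and>
        w (Ncount k us (j - 1)) = a j \<and>
        (\<forall>i<length (us j). w (Ncount k us (j - 1) + 1 + i) = us j ! i)"
    using assms unfolding decomp_def by blast
  show ?thesis using A[of "Suc j"] by simp
qed

lemma dec_pre: "decomp p w k a us \<Longrightarrow> n < k \<Longrightarrow> w n = 0"
  unfolding decomp_def by blast

lemma dec_block:
  assumes D: "decomp p w k a us" and m: "Ncount k us j \<le> m" "m < Ncount k us (Suc j)"
  shows "w m \<in> {0, a (Suc j)}"
proof (cases "m = Ncount k us j")
  case True then show ?thesis using dec_j[OF D, of j] by simp
next
  case False
  define i where "i = m - Ncount k us j - 1"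
  have i: "m = Ncount k us j + 1 + i" "i < length (us (Suc j))"
    using m N_Suc[of k us j] False unfolding i_def by auto
  then have "w m = us (Suc j) ! i" using dec_j[OF D, of j] by simp
  also have "\<dots> \<in> set (us (Suc j))" using i by simp
  finally show ?thesis using dec_j[OF D, of j] by blast
qed

lemma dec_lastnz:
  assumes D: "decomp p w k a us" and m: "Ncount k us j \<le> m" "m < Ncount k us (Suc j)"
  shows "lastnz w (Suc m) = a (Suc j)"
  using m
proof (induction m rule: dec_induct)
  case base
  have "w (Ncount k us j) = a (Suc j)" "a (Suc j) \<noteq> 0" using dec_j[OF D, of j] by auto
  then show ?case by simp
next
  case (step n)
  have "w (Suc n) \<in> {0, a (Suc j)}" using dec_block[OF D, of j "Suc n"] step by simp
  then show ?case using step by auto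
qed

lemma dec_cover:
  assumes "k \<le> n" shows "\<exists>j. Ncount k us j \<le> n \<and> n < Ncount k us (Suc j)"
  using assms
proof (induction n rule: dec_induct)
  case base
  then show ?case using N_Suc[of k us 0] by (intro exI[of _ 0]) (simp add: N0)
next
  case (step n)
  then obtain j where j: "Ncount k us j \<le> n" "n < Ncount k us (Suc j)" by blast
  show ?case
  proof (cases "Suc n < Ncount k us (Suc j)")
    case True then show ?thesis using j by (intro exI[of _ j]) simp
  next
    case False
    then have "Suc n = Ncount k us (Suc j)" using j by simp
    then show ?thesis using N_strict[of k us] by (intro exI[of _ "Suc j"]) (simp add: strict_mono_def)
  qed
qed

lemma dec_P:
  assumes D: "decomp p w k a us"
  shows "Pset w = range (Ncount k us)"
proof (intro set_eqI iffI)
  fix n assume "n \<in> Pset w"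
  then have nz: "w n \<noteq> 0" "w n \<noteq> lastnz w n" by (auto simp: Pset_def)
  have "k \<le> n" using dec_pre[OF D] nz by (metis not_le)
  then obtain j where j: "Ncount k us j \<le> n" "n < Ncount k us (Suc j)" using dec_cover by blast
  show "n \<in> range (Ncount k us)"
  proof (rule ccontr)
    assume "n \<notin> range (Ncount k us)"
    then have "n \<noteq> Ncount k us j" by auto
    then have lt: "Ncount k us j < n" using j by simp
    then obtain m where m: "n = Suc m" by (cases n) auto
    then have m: "n = Suc m" "Ncount k us j \<le> m" using lt by auto
    have "lastnz w n = a (Suc j)" using dec_lastnz[OF D, of j m] m j by simp
    moreover have "w n \<in> {0, a (Suc j)}" using dec_block[OF D] j by blast
    ultimately show False using nz by auto
  qed
next
  fix n assume "n \<in> range (Ncount k us)"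
  then obtain j where n: "n = Ncount k us j" by blast
  have wn: "w n = a (Suc j)" "a (Suc j) \<noteq> 0" using dec_j[OF D, of j] n by auto
  have "lastnz w n \<noteq> a (Suc j)"
  proof (cases j)
    case 0
    then have "lastnz w n = 0" using n dec_pre[OF D] by (intro lastnz_zero) (simp add: N0)
    then show ?thesis using wn by simp
  next
    case (Suc j')
    have lt: "Ncount k us j' < n" using n Suc N_strict[of k us] by (simp add: strict_mono_def)
    then obtain m where m: "n = Suc m" by (cases n) auto
    have "lastnz w n = a (Suc j')" using dec_lastnz[OF D, of j' m] m lt n Suc by simp
    then show ?thesis using dec_j[OF D, of j'] Suc by simp
  qed
  then show "n \<in> Pset w" using wn by (simp add: Pset_def)
qed

lemma dec_inf: "decomp p w k a us \<Longrightarrow> infinite (Pset w)"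
proof -
  assume D: "decomp p w k a us"
  have "inj (Ncount k us)" using N_strict strict_mono_imp_inj_on by blast
  then have "infinite (range (Ncount k us))" by (rule range_inj_infinite)
  then show ?thesis by (simp add: dec_P[OF D])
qed

lemma exists_decomp:
  assumes W: "w \<in> words p" and I: "infinite (Pset w)"
  shows "\<exists>k a us. decomp p w k a us"
proof -
  define e where "e = enumerate (Pset w)"
  have eP: "e n \<in> Pset w" for n using I by (simp add: e_def enumerate_in_set)
  have emono: "e m < e n \<longleftrightarrow> m < n" for m n using I by (simp add: e_def)
  have eall: "n \<in> Pset w \<Longrightarrow> \<exists>j. e j = n" for n using I enumerate_Ex e_def by blast
  define k where "k = e 0"
  define a where "a = (\<lambda>j. w (e (j - 1)))"
  define us where "us = (\<lambda>j. map w [Suc (e (j - 1)) ..< e j])"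
  have NC: "Ncount k us j = e j" for j
  proof (induction j)
    case 0 then show ?case by (simp add: N0 k_def)
  next
    case (Suc j)
    have "e j < e (Suc j)" using emono by simp
    then show ?case using Suc by (simp add: N_Suc us_def)
  qed
  have zero_pre: "w n = 0" if "n < e 0" for n
  proof (rule ccontr)
    assume "w n \<noteq> 0"
    define n' where "n' = (LEAST m. w m \<noteq> 0)"
    have "w n' \<noteq> 0" using \<open>w n \<noteq> 0\<close> unfolding n'_def by (rule LeastI)
    moreover have "n' \<le> n" using \<open>w n \<noteq> 0\<close> unfolding n'_def by (rule Least_le)
    moreover have "\<forall>m<n'. w m = 0" unfolding n'_def using not_less_Least by blast
    then have "lastnz w n' = 0" by (rule lastnz_zero)
    ultimately have "n' \<in> Pset w" by (simp add: Pset_def)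
    then obtain j where "e j = n'" using eall by blast
    moreover have "e 0 \<le> e j" using emono by (metis not_less not_less0)
    ultimately show False using that \<open>n' \<le> n\<close> by simp
  qed
  have blk: "m < e (Suc j) \<longrightarrow> w m \<in> {0, w (e j)} \<and> lastnz w (Suc m) = w (e j)" if "e j \<le> m" for j m
    using that
  proof (induction m rule: dec_induct)
    case base
    then show ?case using eP[of j] by (simp add: Pset_def)
  next
    case (step n)
    show ?case
    proof
      assume lt: "Suc n < e (Suc j)"
      have "Suc n \<notin> Pset w"
      proof
        assume "Suc n \<in> Pset w"
        then obtain i where i: "e i = Suc n" using eall by blast
        then have "e j < e i" "e i < e (Suc j)" using step lt by auto
        then show False using emono by (metis less_Suc_eq_le not_less)
      qed
      moreover have "lastnz w (Suc n) = w (e j)" using step lt by simp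
      ultimately have "w (Suc n) \<in> {0, w (e j)}" by (auto simp: Pset_def)
      then show "w (Suc n) \<in> {0, w (e j)} \<and> lastnz w (Suc (Suc n)) = w (e j)"
        using \<open>lastnz w (Suc n) = w (e j)\<close> by auto
    qed
  qed
  have pre: "\<forall>n<k. w n = 0" using zero_pre k_def by simp
  have mid: "a j \<in> {1..p} \<and> a (Suc j) \<noteq> a j \<and> set (us j) \<subseteq> {0, a j} \<and>
        w (Ncount k us (j - 1)) = a j \<and>
        (\<forall>i<length (us j). w (Ncount k us (j - 1) + 1 + i) = us j ! i)" if "j \<ge> 1" for j
  proof -
    obtain i where j: "j = Suc i" using \<open>j \<ge> 1\<close> by (metis Suc_le_D One_nat_def)
    have ai: "a j = w (e i)" "a (Suc j) = w (e (Suc i))" using j by (simp_all add: a_def)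
    have ei: "e i < e (Suc i)" using emono by simp
    have 1: "a j \<in> {1..p}" using ai eP[of i] W by (auto simp: Pset_def words_def)
    obtain m where m: "e (Suc i) = Suc m" using ei by (metis less_imp_Suc_add)
    have "lastnz w (Suc m) = w (e i)" using blk[of i m] m ei by simp
    then have 2: "a (Suc j) \<noteq> a j" using eP[of "Suc i"] ai m by (simp add: Pset_def)
    have 3: "set (us j) \<subseteq> {0, a j}"
    proof
      fix x assume "x \<in> set (us j)"
      then obtain q where "x = w q" "Suc (e i) \<le> q" "q < e (Suc i)" using j by (auto simp: us_def)
      then show "x \<in> {0, a j}" using blk[of i q] ai by auto
    qed
    have 4: "w (Ncount k us (j - 1)) = a j" using j NC ai by simp
    have 5: "\<forall>i'<length (us j). w (Ncount k us (j - 1) + 1 + i') = us j ! i'"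
      using j NC by (simp add: us_def)
    show ?thesis using 1 2 3 4 5 by blast
  qed
  have "decomp p w k a us"
    unfolding decomp_def using pre mid by blast
  then show ?thesis by blast
qed

lemma Lseq_dec:
  assumes "\<exists>k a us. decomp p w k a us"
  shows "\<exists>k a us. decomp p w k a us \<and> Lseq p w = (\<lambda>n. 2 ^ Ncount k us (Suc n))"
proof -
  let ?P = "\<lambda>(k, a, us). decomp p w k a us"
  let ?S = "SOME x. ?P x"
  from assms have "\<exists>x. ?P x" by auto
  then have S: "?P ?S" by (rule someI_ex)
  obtain k a us where "?S = (k, a, us)" by (cases ?S) auto
  then show ?thesis using S unfolding Lseq_def by auto
qed

lemma Lseq_nodec:
  assumes "\<not> (\<exists>k a us. decomp p x k a us)" "\<not> (\<exists>k a us. decomp p y k a us)"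
  shows "Lseq p x = Lseq p y"
proof -
  have "(\<lambda>(k, a, us). decomp p x k a us) = (\<lambda>(k, a, us). decomp p y k a us)"
    using assms by (auto simp: fun_eq_iff)
  then show ?thesis by (simp add: Lseq_def)
qed

lemma compat_shift:
  fixes f g :: "nat \<Rightarrow> nat"
  assumes f: "strict_mono f" and g: "strict_mono g" and R: "\<forall>c\<ge>B. (c \<in> range f \<longleftrightarrow> c \<in> range g)"
  shows "\<exists>l h. \<forall>n. f (l + n) = g (h + n)"
proof -
  have "f B \<ge> B" using f strict_mono_imp_increasing by blast
  then obtain h where h: "g h = f B" using R by (metis rangeE rangeI)
  have "f (B + n) = g (h + n)" for n
  proof (induction n)
    case 0 then show ?case using h by simp
  next
    case (Suc n)
    have c: "f (B + n) \<ge> B" using f strict_mono_imp_increasing by (metis le_add1 order_trans)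
    have f1: "f (B + Suc n) > f (B + n)" using f by (simp add: strict_mono_less)
    have g1: "g (h + Suc n) > g (h + n)" using g by (simp add: strict_mono_less)
    obtain m where m: "g m = f (B + Suc n)" using R f1 c by (metis rangeE rangeI less_imp_le order_trans)
    then have "m > h + n" using f1 Suc g by (metis strict_mono_less)
    then have le1: "g (h + Suc n) \<le> f (B + Suc n)" using m g by (metis Suc_le_eq add_Suc_right strict_mono_less_eq)
    obtain m' where m': "f m' = g (h + Suc n)" using R g1 c Suc by (metis rangeE rangeI less_imp_le order_trans)
    then have "m' > B + n" using g1 Suc f by (metis strict_mono_less)
    then have "f (B + Suc n) \<le> g (h + Suc n)" using m' f by (metis Suc_le_eq add_Suc_right strict_mono_less_eq)
    then show ?case using le1 by simp
  qed
  then show ?thesis by blast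
qed

lemma compat_refl: "compatible x x"
  unfolding compatible_def by blast

lemma compat_sym: "compatible x y \<Longrightarrow> compatible y x"
  unfolding compatible_def by metis

lemma compat_trans: assumes "compatible x y" "compatible y z" shows "compatible x z"
proof -
  obtain l h where 1: "\<forall>n. x (l + n) = y (h + n)" using assms(1) compatible_def by blast
  obtain l' h' where 2: "\<forall>n. y (l' + n) = z (h' + n)" using assms(2) compatible_def by blast
  have "x ((l + l') + n) = z ((h' + h) + n)" for n
  proof -
    have "x ((l + l') + n) = y (h + (l' + n))" using 1 by (metis add.assoc)
    also have "\<dots> = y (l' + (h + n))" by (simp add: ac_simps)
    also have "\<dots> = z (h' + (h + n))" using 2 by blast
    also have "\<dots> = z ((h' + h) + n)" by (simp add: ac_simps)
    finally show ?thesis .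
  qed
  then show ?thesis unfolding compatible_def by blast
qed

lemma lastnz_agree:
  assumes A: "\<forall>n\<ge>c. x n = y n" and m: "m \<ge> c" "x m \<noteq> 0" and n: "m < n"
  shows "lastnz x n = lastnz y n"
  using n
proof (induction n)
  case 0 then show ?case by simp
next
  case (Suc n)
  show ?case
  proof (cases "n = m")
    case True then show ?thesis using A m by simp
  next
    case False
    then have "m < n" using Suc by simp
    then show ?thesis using Suc A m by simp
  qed
qed

lemma G1:
  assumes X: "x \<in> words p" and Y: "y \<in> words p" and A: "\<forall>n\<ge>c. x n = y n"
    and D: "\<exists>k a us. decomp p x k a us"
  shows "compatible (Lseq p x) (Lseq p y)"
proof -
  obtain k a us where Dx: "decomp p x k a us" and Lx: "Lseq p x = (\<lambda>n. 2 ^ Ncount k us (Suc n))"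
    using Lseq_dec[OF D] by blast
  have Ix: "infinite (Pset x)" using dec_inf[OF Dx] .
  then obtain m where m: "m \<ge> c" "m \<in> Pset x" using infinite_nat_iff_unbounded_le by blast
  have AP: "n \<in> Pset x \<longleftrightarrow> n \<in> Pset y" if "m < n" for n
  proof -
    have "x m \<noteq> 0" using m by (simp add: Pset_def)
    then have "lastnz x n = lastnz y n" using lastnz_agree[OF A m(1) _ that] by blast
    moreover have "x n = y n" using A m(1) that by simp
    ultimately show ?thesis by (simp add: Pset_def)
  qed
  have "infinite (Pset y)"
    unfolding infinite_nat_iff_unbounded_le
  proof
    fix M
    obtain n where "n \<ge> max M (Suc m)" "n \<in> Pset x" using Ix infinite_nat_iff_unbounded_le by blast
    then show "\<exists>n\<ge>M. n \<in> Pset y" using AP by auto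
  qed
  then have Dy0: "\<exists>k a us. decomp p y k a us" using exists_decomp Y by blast
  obtain k' a' us' where Dy: "decomp p y k' a' us'" and Ly: "Lseq p y = (\<lambda>n. 2 ^ Ncount k' us' (Suc n))"
    using Lseq_dec[OF Dy0] by blast
  let ?f = "\<lambda>n. Ncount k us (Suc n)" and ?g = "\<lambda>n. Ncount k' us' (Suc n)"
  have sf: "strict_mono ?f" using N_strict[of k us] by (simp add: strict_mono_def)
  have sg: "strict_mono ?g" using N_strict[of k' us'] by (simp add: strict_mono_def)
  define B where "B = max (Suc m) (max (Suc (Ncount k us 0)) (Suc (Ncount k' us' 0)))"
  have rf: "c' \<in> range ?f \<longleftrightarrow> c' \<in> Pset x" if "c' \<ge> B" for c'
  proof -
    have "c' \<in> range ?f \<longleftrightarrow> c' \<in> range (Ncount k us)"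
    proof
      assume "c' \<in> range (Ncount k us)"
      then obtain j where j: "c' = Ncount k us j" by blast
      have "j \<noteq> 0"
      proof
        assume "j = 0" then show False using j that B_def by simp
      qed
      then show "c' \<in> range ?f" using j by (metis not0_implies_Suc rangeI)
    qed auto
    then show ?thesis using dec_P[OF Dx] by simp
  qed
  have rg: "c' \<in> range ?g \<longleftrightarrow> c' \<in> Pset y" if "c' \<ge> B" for c'
  proof -
    have "c' \<in> range ?g \<longleftrightarrow> c' \<in> range (Ncount k' us')"
    proof
      assume "c' \<in> range (Ncount k' us')"
      then obtain j where j: "c' = Ncount k' us' j" by blast
      have "j \<noteq> 0"
      proof
        assume "j = 0" then show False using j that B_def by simp
      qed
      then show "c' \<in> range ?g" using j by (metis not0_implies_Suc rangeI)
    qed auto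
    then show ?thesis using dec_P[OF Dy] by simp
  qed
  have "\<forall>c'\<ge>B. (c' \<in> range ?f \<longleftrightarrow> c' \<in> range ?g)"
  proof (intro allI impI)
    fix c' assume c': "c' \<ge> B"
    have "m < c'" using c' unfolding B_def by simp
    then show "c' \<in> range ?f \<longleftrightarrow> c' \<in> range ?g" using rf[OF c'] rg[OF c'] AP by simp
  qed
  then obtain l h where lh: "\<forall>n. ?f (l + n) = ?g (h + n)" using compat_shift[OF sf sg] by blast
  have "\<forall>n. Lseq p x (l + n) = Lseq p y (h + n)" unfolding Lx Ly using lh by simp
  then show ?thesis unfolding compatible_def by blast
qed

lemma G:
  assumes X: "x \<in> words p" and Y: "y \<in> words p" and A: "\<forall>n\<ge>c. x n = y n"
  shows "compatible (Lseq p x) (Lseq p y)"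
proof (cases "\<exists>k a us. decomp p x k a us")
  case True then show ?thesis using G1[OF X Y A] by blast
next
  case F: False
  show ?thesis
  proof (cases "\<exists>k a us. decomp p y k a us")
    case True
    have "\<forall>n\<ge>c. y n = x n" using A by simp
    then show ?thesis using G1[OF Y X _ True] compat_sym by blast
  next
    case False then show ?thesis using Lseq_nodec[OF F False] compat_refl by simp
  qed
qed

lemma gen_words: "x \<in> words p \<Longrightarrow> i \<in> {1..p} \<Longrightarrow> gen i x \<in> words p"
  by (auto simp: words_def gen_def)

lemma gen_words_rev: assumes "gen i x \<in> words p" "i \<in> {1..p}" shows "x \<in> words p"
  unfolding words_def mem_Collect_eq
proof
  fix n
  have "gen i x n \<le> p" using assms(1) by (simp add: words_def)
  then show "x n \<le> p" using assms(2) by (auto simp: gen_def split: if_splits)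
qed

lemma step_compat:
  assumes X: "x \<in> words p" and i: "i \<in> {1..p}"
  shows "compatible (Lseq p x) (Lseq p (gen i x))"
proof (cases "\<forall>n. x n = 0")
  case True
  have gx: "gen i x = (\<lambda>_. i)" using True by (auto simp: gen_def fun_eq_iff)
  have "Pset x = {}" using True by (simp add: Pset_def)
  then have nx: "\<not> (\<exists>k a us. decomp p x k a us)" using dec_inf by fastforce
  have "Pset (\<lambda>_. i) \<subseteq> {0}"
  proof
    fix n assume "n \<in> Pset (\<lambda>_. i)"
    then show "n \<in> {0}" by (cases n) (auto simp: Pset_def)
  qed
  then have "finite (Pset (\<lambda>_. i))" using finite_subset by blast
  then have ny: "\<not> (\<exists>k a us. decomp p (gen i x) k a us)" using dec_inf gx by metis
  show ?thesis using Lseq_nodec[OF nx ny] compat_refl by simp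
next
  case False
  then obtain n0 where n0: "x n0 \<noteq> 0" by blast
  have "\<forall>n\<ge>Suc n0. x n = gen i x n" using n0 by (auto simp: gen_def)
  then show ?thesis using G[OF X gen_words[OF X i]] by blast
qed

theorem lemma4p18:
  fixes p :: nat and u v :: "nat \<Rightarrow> nat"
  assumes "p \<ge> 1" and "u \<in> E1 p" and "v \<in> E1 p" and "v \<in> orbit p u"
  shows "compatible (Lseq p u) (Lseq p v)"
proof -
  have U: "u \<in> words p" using assms(2) by (simp add: E1_def)
  from assms(4) have "(u, v) \<in> {(x, y). schreier_adj p x y}\<^sup>*" by (simp add: orbit_def)
  then have "v \<in> words p \<and> compatible (Lseq p u) (Lseq p v)"
  proof (induction rule: rtrancl_induct)
    case base then show ?case using U compat_refl by simp
  next
    case (step y z)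
    then obtain i where i: "i \<in> {1..p}" and yz: "z = gen i y \<or> y = gen i z"
      by (auto simp: schreier_adj_def)
    from yz show ?case
    proof
      assume z: "z = gen i y"
      then show ?thesis using step gen_words[OF _ i] step_compat[OF _ i] compat_trans by blast
    next
      assume y: "y = gen i z"
      then have Z: "z \<in> words p" using step gen_words_rev[OF _ i] by blast
      then have "compatible (Lseq p z) (Lseq p y)" using step_compat[OF Z i] y by simp
      then show ?thesis using step Z compat_sym compat_trans by blast
    qed
  qed
  then show ?thesis by blast
qed

end
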